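(* Let $T$ be an $n\times n$ complex matrix with distinct eigenvalues $\lambda_1,\dots,\lambda_n$. Let $u_1,\dots,u_n$ be unit eigenvectors of $T$ with $Tu_i=\lambda_iu_i$, and let $v_1,\dots,v_n$ be unit eigenvectors of $T^*$ with $T^*v_i=\overline{\lambda_i}v_i$. If there exist complex numbers $\alpha_1,\dots,\alpha_n$ of modulus one such that \[ \langle u_i,u_j\rangle=\overline{\alpha_i}\,\alpha_j\,\langle v_j,v_i\rangle \] for all $1\le i<j\le n$, then $T$ is unitarily equivalent to a complex symmetric matrix.
   Context: $\langle\cdot,\cdot\rangle$ is the standard inner product on $\mathbb{C}^n$, linear in the first argument. A complex symmetric matrix is a square complex matrix $S$ with $S=S^t$. Two matrices $A,B\in M_n(\mathbb{C})$ are unitarily equivalent if $A=W^*BW$ for some unitary $W$. *)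

theory Defs
  imports "HOL-Analysis.Analysis"
begin

definition cinner :: "complex^'n \<Rightarrow> complex^'n \<Rightarrow> complex" where
  "cinner x y = (\<Sum>k\<in>UNIV. x $ k * cnj (y $ k))"

definition adjoint_mat :: "complex^'n^'n \<Rightarrow> complex^'n^'n" where
  "adjoint_mat A = (\<chi> i j. cnj (A $ j $ i))"

definition unitary_mat :: "complex^'n^'n \<Rightarrow> bool" where
  "unitary_mat W \<longleftrightarrow> adjoint_mat W ** W = mat 1 \<and> W ** adjoint_mat W = mat 1"

definition unitarily_equivalent :: "complex^'n^'n \<Rightarrow> complex^'n^'n \<Rightarrow> bool" where
  "unitarily_equivalent A B \<longleftrightarrow> (\<exists>W. unitary_mat W \<and> A = adjoint_mat W ** B ** W)"

definition complex_symmetric :: "complex^'n^'n \<Rightarrow> bool" where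
  "complex_symmetric S \<longleftrightarrow> transpose S = S"

end

theory Submission imports Defs begin

lemma cinner_add_left: "cinner (x + y) z = cinner x z + cinner y z"
  by (simp add: cinner_def distrib_right sum.distrib)
lemma cinner_add_right: "cinner x (y + z) = cinner x y + cinner x z"
  by (simp add: cinner_def distrib_left sum.distrib)
lemma cinner_diff_left: "cinner (x - y) z = cinner x z - cinner y z"
  by (simp add: cinner_def left_diff_distrib sum_subtractf)
lemma cinner_scale_left: "cinner (a *s x) y = a * cinner x y"
  by (simp add: cinner_def sum_distrib_left mult.assoc)
lemma cinner_scale_right: "cinner x (a *s y) = cnj a * cinner x y"
  by (simp add: cinner_def sum_distrib_left algebra_simps)
lemma cinner_zero_left[simp]: "cinner 0 y = 0" by (simp add: cinner_def)
lemma cinner_zero_right[simp]: "cinner y 0 = 0" by (simp add: cinner_def)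
lemma cinner_sum_left: "cinner (\<Sum>i\<in>A. f i) y = (\<Sum>i\<in>A. cinner (f i) y)"
  by (induction A rule: infinite_finite_induct) (auto simp: cinner_add_left)
lemma cinner_sum_right: "cinner y (\<Sum>i\<in>A. f i) = (\<Sum>i\<in>A. cinner y (f i))"
  by (induction A rule: infinite_finite_induct) (auto simp: cinner_add_right)
lemma cinner_cnj: "cnj (cinner x y) = cinner y x"
  by (simp add: cinner_def mult.commute)
lemma inner_cinner: "x \<bullet> y = Re (cinner x y)"
  by (simp add: cinner_def inner_vec_def inner_complex_def Re_sum)
lemma cinner_self: "cinner x x = complex_of_real ((norm x)^2)"
proof -
  have "cinner x x = (\<Sum>k\<in>UNIV. complex_of_real ((cmod (x $ k))^2))"
    unfolding cinner_def by (rule sum.cong) (simp_all only: complex_norm_square)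
  also have "\<dots> = complex_of_real (\<Sum>k\<in>UNIV. (cmod (x $ k))^2)" by simp
  also have "(\<Sum>k\<in>UNIV. (cmod (x $ k))^2) = (norm x)^2"
    by (simp add: norm_vec_def L2_set_def sum_nonneg)
  finally show ?thesis .
qed
lemma cinner_adjoint: "cinner (A *v x) y = cinner x (adjoint_mat A *v y)"
  by (simp add: cinner_def adjoint_mat_def matrix_vector_mult_def sum_distrib_left
      sum_distrib_right mult_ac) (rule sum.swap)
lemma cinner_eq0_imp: "cinner x x = 0 \<Longrightarrow> x = 0"
  by (simp add: cinner_self)

lemma cinner_sums: "cinner (\<Sum>i\<in>A. f i *s x i) (\<Sum>j\<in>B. g j *s y j)
   = (\<Sum>i\<in>A. \<Sum>j\<in>B. f i * cnj (g j) * cinner (x i) (y j))"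
proof -
  have "cinner (\<Sum>i\<in>A. f i *s x i) (\<Sum>j\<in>B. g j *s y j)
     = (\<Sum>i\<in>A. f i * cinner (x i) (\<Sum>j\<in>B. g j *s y j))"
    by (subst cinner_sum_left) (simp add: cinner_scale_left)
  also have "\<dots> = (\<Sum>i\<in>A. \<Sum>j\<in>B. f i * cnj (g j) * cinner (x i) (y j))"
    by (simp add: cinner_sum_right cinner_scale_right sum_distrib_left mult.assoc)
  finally show ?thesis .
qed

lemma norm1_mult_cnj: "norm (a::complex) = 1 \<Longrightarrow> a * cnj a = 1"
  by (metis complex_norm_square of_real_1 power_one)

lemma scaleR_vec_of_real: "(c::real) *\<^sub>R (x::complex^'n) = complex_of_real c *s x"
  unfolding vec_eq_iff vector_scaleR_component vector_smult_component by (simp add: scaleR_conv_of_real)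

locale lsetup =
  fixes T :: "complex^('n::{finite,linorder})^('n::{finite,linorder})"
    and lam :: "('n::{finite,linorder}) \<Rightarrow> complex"
    and u v :: "('n::{finite,linorder}) \<Rightarrow> complex^('n::{finite,linorder})"
    and \<alpha> :: "('n::{finite,linorder}) \<Rightarrow> complex"
  assumes distinct: "inj lam"
    and u_unit: "\<And>i. norm (u i) = 1"
    and u_eig: "\<And>i. T *v u i = lam i *s u i"
    and v_unit: "\<And>i. norm (v i) = 1"
    and v_eig: "\<And>i. adjoint_mat T *v v i = cnj (lam i) *s v i"
    and alpha_mod: "\<And>i. norm (\<alpha> i) = 1"
    and rel: "\<And>i j. i < j \<Longrightarrow> cinner (u i) (u j) = cnj (\<alpha> i) * \<alpha> j * cinner (v j) (v i)"
begin

lemma uv_orth: assumes "i \<noteq> j" shows "cinner (u i) (v j) = 0"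
proof -
  have "lam i * cinner (u i) (v j) = cinner (T *v u i) (v j)"
    by (simp add: u_eig cinner_scale_left)
  also have "\<dots> = cinner (u i) (adjoint_mat T *v v j)" by (rule cinner_adjoint)
  also have "\<dots> = lam j * cinner (u i) (v j)" by (simp add: v_eig cinner_scale_right)
  finally have "(lam i - lam j) * cinner (u i) (v j) = 0" by (simp add: algebra_simps)
  moreover have "lam i \<noteq> lam j" using distinct assms by (meson injD)
  ultimately show ?thesis by simp
qed

lemma u_nz: "u i \<noteq> 0" using u_unit[of i] by auto

lemma u_indep_aux:
  "finite I \<Longrightarrow> (\<Sum>i\<in>I. c i *s u i) = 0 \<Longrightarrow> \<forall>i\<in>I. c i = 0"
proof (induction I arbitrary: c rule: finite_induct)
  case empty then show ?case by simp
next
  case (insert k I)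
  have s: "c k *s u k + (\<Sum>i\<in>I. c i *s u i) = 0" using insert by simp
  define y where "y = (\<Sum>i\<in>I. c i *s u i)"
  have y: "y = - (c k *s u k)" using s unfolding y_def by (metis add_diff_cancel_left' diff_0)
  have Ty1: "T *v y = (\<Sum>i\<in>I. (c i * lam i) *s u i)"
    by (simp add: y_def vec.sum vec.scale u_eig vector_smult_assoc)
  have Ty2: "T *v y = lam k *s y"
    by (simp add: y vec.neg vec.scale u_eig vector_smult_assoc mult.commute)
  have ly: "lam k *s y = (\<Sum>i\<in>I. (lam k * c i) *s u i)"
    by (simp add: y_def vec.scale_sum_right vector_smult_assoc)
  have "(\<Sum>i\<in>I. (c i * (lam i - lam k)) *s u i) = (\<Sum>i\<in>I. (c i * lam i - lam k * c i) *s u i)"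
    by (simp add: algebra_simps)
  also have "\<dots> = (\<Sum>i\<in>I. (c i * lam i) *s u i) - (\<Sum>i\<in>I. (lam k * c i) *s u i)"
    by (simp add: vector_sub_rdistrib sum_subtractf)
  also have "\<dots> = 0" using Ty1 Ty2 ly by simp
  finally have "\<forall>i\<in>I. c i * (lam i - lam k) = 0" using insert.IH[of "\<lambda>i. c i * (lam i - lam k)"] by blast
  moreover have "\<forall>i\<in>I. lam i \<noteq> lam k" using insert(2) distinct by (metis injD)
  ultimately have I0: "\<forall>i\<in>I. c i = 0" by simp
  then have "c k *s u k = 0" using s by simp
  then have "c k = 0" using u_nz by simp
  then show ?case using I0 by simp
qed


lemma u_inj: "inj u"
proof (rule injI)
  fix i j assume e: "u i = u j"
  have "lam i *s u i = T *v u i" by (simp add: u_eig)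
  also have "\<dots> = T *v u j" by (simp add: e)
  also have "\<dots> = lam j *s u i" by (simp add: u_eig e)
  finally have "lam i *s u i = lam j *s u i" .
  then have "lam i = lam j" using u_nz by simp
  then show "i = j" using distinct by (meson injD)
qed

lemma u_indep: "vec.independent (range u)"
proof (rule vec.independent_if_scalars_zero)
  show "finite (range u)" by simp
next
  fix f x assume h: "(\<Sum>x\<in>range u. f x *s x) = 0" "x \<in> range u"
  have e: "(\<Sum>x\<in>range u. f x *s x) = (\<Sum>i\<in>UNIV. f (u i) *s u i)"
    unfolding sum.reindex[OF u_inj] o_def by (rule refl)
  from h(1) have z: "(\<Sum>i\<in>UNIV. f (u i) *s u i) = 0" unfolding e .
  have all: "\<forall>i\<in>UNIV. f (u i) = 0" using u_indep_aux[of UNIV "\<lambda>i. f (u i)"] z by simp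
  obtain i where "x = u i" using h(2) by blast
  then show "f x = 0" using all by blast
qed

lemma u_span: "vec.span (range u) = UNIV"
proof -
  have c: "card (range u) = CARD('n)" using card_image[OF u_inj] by simp
  have "UNIV \<subseteq> vec.span (range u)"
    by (rule vec.card_ge_dim_independent[OF _ u_indep]) (auto simp: c card_cart_basis)
  then show ?thesis by auto
qed

lemma u_expand_ex: "\<exists>c. x = (\<Sum>i\<in>UNIV. c i *s u i)"
proof -
  have "x \<in> vec.span (range u)" using u_span by simp
  then obtain g where "x = (\<Sum>w\<in>range u. g w *s w)" using vec.span_finite[of "range u"] by auto
  then have "x = (\<Sum>i\<in>UNIV. g (u i) *s u i)" by (simp add: sum.reindex[OF u_inj])
  then show ?thesis by (rule exI[of _ "\<lambda>i. g (u i)"])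
qed

definition d where "d i = cinner (u i) (v i)"

lemma coeff: "cinner (\<Sum>i\<in>UNIV. c i *s u i) (v j) = c j * d j"
proof -
  have "cinner (\<Sum>i\<in>UNIV. c i *s u i) (v j) = (\<Sum>i\<in>UNIV. c i * cinner (u i) (v j))"
    by (simp add: cinner_sum_left cinner_scale_left)
  also have "\<dots> = (\<Sum>i\<in>UNIV. if i = j then c j * d j else 0)"
    by (rule sum.cong) (auto simp: uv_orth d_def)
  finally show ?thesis by simp
qed

lemma d_nz: "d j \<noteq> 0"
proof
  assume "d j = 0"
  obtain c where vj: "v j = (\<Sum>i\<in>UNIV. c i *s u i)" using u_expand_ex by blast
  have "cinner (v j) (v j) = c j * d j" using coeff[of c j] unfolding vj[symmetric] .
  then have "cinner (v j) (v j) = 0" using \<open>d j = 0\<close> by simp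
  then show False using v_unit[of j] by (simp add: cinner_self)
qed

lemma expand: "x = (\<Sum>i\<in>UNIV. (cinner x (v i) / d i) *s u i)"
proof -
  obtain c where c: "x = (\<Sum>i\<in>UNIV. c i *s u i)" using u_expand_ex by blast
  have "cinner x (v i) / d i = c i" for i using c coeff d_nz by simp
  then show ?thesis using c by simp
qed

lemma zero_test: "(\<And>j. cinner z (v j) = 0) \<Longrightarrow> z = 0"
  by (subst expand) simp

definition w where "w i = \<alpha> i *s v i"
definition C where "C x = (\<Sum>i\<in>UNIV. cnj (cinner x (v i) / d i) *s w i)"

lemma C_expand: "C (\<Sum>i\<in>UNIV. c i *s u i) = (\<Sum>i\<in>UNIV. cnj (c i) *s w i)"
  unfolding C_def coeff using d_nz by simp

lemma C_add: "C (x + y) = C x + C y"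
  by (simp add: C_def cinner_add_left add_divide_distrib vector_sadd_rdistrib sum.distrib)
lemma C_scale: "C (a *s x) = cnj a *s C x"
  by (simp add: C_def cinner_scale_left vec.scale_sum_right vector_smult_assoc)
lemma C_zero: "C 0 = 0" by (simp add: C_def)
lemma C_sum: "C (\<Sum>i\<in>A. f i) = (\<Sum>i\<in>A. C (f i))"
  by (induction A rule: infinite_finite_induct) (auto simp: C_add C_zero)
lemma C_diff: "C (x - y) = C x - C y"
  by (metis C_add add_diff_cancel diff_add_cancel)

lemma a_cnj: "\<alpha> i * cnj (\<alpha> i) = 1" by (rule norm1_mult_cnj[OF alpha_mod])
lemma cinner_vv: "cinner (v i) (v i) = 1" using v_unit[of i] by (simp add: cinner_self)
lemma cinner_uu: "cinner (u i) (u i) = 1" using u_unit[of i] by (simp add: cinner_self)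

lemma gram: "cinner (u j) (u i) = cinner (w i) (w j)"
proof -
  have ww: "cinner (w i) (w j) = \<alpha> i * cnj (\<alpha> j) * cinner (v i) (v j)"
    by (simp add: w_def cinner_scale_left cinner_scale_right)
  consider "j < i" | "i < j" | "i = j" by fastforce
  then show ?thesis
  proof cases
    case 1 then show ?thesis using rel[OF 1] ww by (simp add: mult_ac)
  next
    case 2
    have "cinner (u j) (u i) = cnj (cinner (u i) (u j))" by (simp add: cinner_cnj)
    also have "\<dots> = \<alpha> i * cnj (\<alpha> j) * cinner (v i) (v j)" using rel[OF 2] by (simp add: cinner_cnj mult_ac)
    finally show ?thesis using ww by simp
  next
    case 3 then show ?thesis using ww by (simp add: cinner_uu cinner_vv a_cnj)
  qed
qed

lemma C_inner: "cinner (C x) (C y) = cinner y x"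
proof -
  obtain a where a: "x = (\<Sum>i\<in>UNIV. a i *s u i)" using u_expand_ex by blast
  obtain b where b: "y = (\<Sum>i\<in>UNIV. b i *s u i)" using u_expand_ex by blast
  have "cinner (C x) (C y) = (\<Sum>i\<in>UNIV. \<Sum>j\<in>UNIV. cnj (a i) * cnj (cnj (b j)) * cinner (w i) (w j))"
    unfolding a b C_expand by (rule cinner_sums)
  also have "\<dots> = (\<Sum>i\<in>UNIV. \<Sum>j\<in>UNIV. b j * cnj (a i) * cinner (u j) (u i))"
    by (simp add: gram mult.commute)
  also have "\<dots> = (\<Sum>j\<in>UNIV. \<Sum>i\<in>UNIV. b j * cnj (a i) * cinner (u j) (u i))"
    by (rule sum.swap)
  also have "\<dots> = cinner y x"
    unfolding a b by (rule cinner_sums[symmetric])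
  finally show ?thesis .
qed


lemma C_u: "C (u i) = w i"
proof -
  have q: "cinner (u i) (v j) / d j = (if j = i then 1 else 0)" for j
    using uv_orth[of i j] d_nz[of j] by (auto simp: d_def)
  have "C (u i) = (\<Sum>j\<in>UNIV. if j = i then w j else 0)"
    unfolding C_def by (rule sum.cong) (simp_all add: q)
  then show ?thesis by simp
qed

lemma T_expand: "T *v (\<Sum>i\<in>UNIV. a i *s u i) = (\<Sum>i\<in>UNIV. (a i * lam i) *s u i)"
  by (simp add: vec.sum vec.scale u_eig vector_smult_assoc)

lemma adjT_w: "adjoint_mat T *v w i = cnj (lam i) *s w i"
  by (simp add: w_def vec.scale v_eig vector_smult_assoc mult.commute)

lemma C_T: "C (T *v x) = adjoint_mat T *v C x"
proof -
  obtain a where a: "x = (\<Sum>i\<in>UNIV. a i *s u i)" using u_expand_ex by blast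
  have "C (T *v x) = (\<Sum>i\<in>UNIV. cnj (a i * lam i) *s w i)"
    unfolding a T_expand C_expand ..
  also have "\<dots> = (\<Sum>i\<in>UNIV. cnj (a i) *s (adjoint_mat T *v w i))"
    by (simp add: adjT_w vector_smult_assoc mult.commute)
  also have "\<dots> = adjoint_mat T *v C x"
    unfolding a C_expand by (simp add: vec.sum vec.scale)
  finally show ?thesis .
qed

lemma v_from_w: "v j = cnj (\<alpha> j) *s w j"
proof -
  have "cnj (\<alpha> j) * \<alpha> j = 1" using a_cnj[of j] by (simp add: mult.commute)
  then show ?thesis by (simp add: w_def vector_smult_assoc)
qed

lemma C_w: "C (w i) = u i"
proof -
  have "C (w i) - u i = 0"
  proof (rule zero_test)
    fix j
    have "cinner (C (w i)) (w j) = cinner (C (w i)) (C (u j))" by (simp add: C_u)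
    also have "\<dots> = cinner (u j) (w i)" by (rule C_inner)
    finally have 1: "cinner (C (w i)) (w j) = cnj (\<alpha> i) * cinner (u j) (v i)"
      by (simp add: w_def cinner_scale_right)
    have 2: "cinner (u i) (w j) = cnj (\<alpha> j) * cinner (u i) (v j)"
      by (simp add: w_def cinner_scale_right)
    have "cinner (C (w i) - u i) (w j) = 0"
    proof (cases "i = j")
      case True then show ?thesis using 1 2 by (simp add: cinner_diff_left)
    next
      case False then show ?thesis using 1 2 uv_orth[of i j] uv_orth[of j i] by (simp add: cinner_diff_left)
    qed
    then show "cinner (C (w i) - u i) (v j) = 0"
      by (simp add: v_from_w[of j] cinner_scale_right)
  qed
  then show ?thesis by simp
qed

lemma CC: "C (C x) = x"
proof -
  obtain a where a: "x = (\<Sum>i\<in>UNIV. a i *s u i)" using u_expand_ex by blast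
  have Cx: "C x = (\<Sum>i\<in>UNIV. cnj (a i) *s w i)" unfolding a C_expand ..
  have "C (C x) = (\<Sum>i\<in>UNIV. C (cnj (a i) *s w i))" unfolding Cx C_sum ..
  also have "\<dots> = x" unfolding a by (simp add: C_scale C_w)
  finally show ?thesis .
qed

lemma R_sym: "C x = x \<Longrightarrow> C y = y \<Longrightarrow> cinner (T *v x) y = cinner (T *v y) x"
proof -
  assume x: "C x = x" and y: "C y = y"
  have "cinner (T *v x) y = cinner (C y) (C (T *v x))" by (rule C_inner[symmetric])
  also have "\<dots> = cinner y (adjoint_mat T *v x)" by (simp add: C_T x y)
  also have "\<dots> = cinner (T *v y) x" by (rule cinner_adjoint[symmetric])
  finally show ?thesis .
qed

lemma R_real: "C x = x \<Longrightarrow> C y = y \<Longrightarrow> cinner x y = complex_of_real (x \<bullet> y)"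
proof -
  assume x: "C x = x" and y: "C y = y"
  have "cinner x y = cinner (C y) (C x)" by (rule C_inner[symmetric])
  also have "\<dots> = cnj (cinner x y)" by (simp add: x y cinner_cnj)
  finally have "Im (cinner x y) = 0" by (metis cnj.sel(2) neg_equal_zero)
  then show ?thesis by (simp add: inner_cinner complex_eq_iff)
qed

lemma R_subspace: "subspace {x. C x = x}"
  unfolding subspace_def by (simp add: C_zero C_add scaleR_vec_of_real C_scale)


lemma main: "\<exists>S. complex_symmetric S \<and> unitarily_equivalent T S"
proof -
  obtain B where BR: "B \<subseteq> {x. C x = x}" and Borth: "pairwise orthogonal B"
    and Bn: "\<And>x. x \<in> B \<Longrightarrow> norm x = 1" and Bi: "independent B"
    and Bspan: "span B = {x. C x = x}"
    by (rule orthonormal_basis_subspace[OF R_subspace]) blast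
  have finB: "finite B" using independent_bound[OF Bi] by blast
  have CB: "\<And>b. b \<in> B \<Longrightarrow> C b = b" using BR by blast
  have orthn: "cinner b b' = (if b = b' then 1 else 0)" if "b \<in> B" "b' \<in> B" for b b'
  proof (cases "b = b'")
    case True then show ?thesis using Bn[OF that(1)] by (simp add: cinner_self)
  next
    case False
    then have "b \<bullet> b' = 0" using Borth that unfolding pairwise_def orthogonal_def by blast
    then show ?thesis using R_real[OF CB[OF that(1)] CB[OF that(2)]] False by simp
  qed
  have vind: "vec.independent B"
  proof (rule vec.independent_if_scalars_zero[OF finB])
    fix f x assume h: "(\<Sum>y\<in>B. f y *s y) = 0" "x \<in> B"
    have "cinner (\<Sum>y\<in>B. f y *s y) x = (\<Sum>y\<in>B. f y * cinner y x)"
      by (simp add: cinner_sum_left cinner_scale_left)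
    also have "\<dots> = (\<Sum>y\<in>B. if y = x then f x else 0)"
      by (rule sum.cong) (simp_all add: orthn h(2))
    also have "\<dots> = f x" using h(2) finB by simp
    finally show "f x = 0" using h(1) by simp
  qed
  have sub: "subspace (vec.span B)"
    unfolding subspace_def by (simp add: vec.span_zero vec.span_add scaleR_vec_of_real vec.span_scale)
  have RB: "{x. C x = x} \<subseteq> vec.span B"
    unfolding Bspan[symmetric] by (rule span_minimal[OF vec.span_superset sub])
  have vspan: "vec.span B = UNIV"
  proof -
    have "x \<in> vec.span B" for x
    proof -
      define a where "a = (1/2 :: complex) *s (x + C x)"
      define b where "b = (- (\<i>/2)) *s (x - C x)"
      have Ca: "C a = a" unfolding a_def by (simp add: C_scale C_add CC add.commute)
      have Cb: "C b = b" unfolding b_def by (simp add: C_scale C_diff CC vec_eq_iff algebra_simps)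
      have xe: "x = a + \<i> *s b" unfolding a_def b_def by (simp add: vec_eq_iff algebra_simps)
      have "a \<in> vec.span B" "b \<in> vec.span B" using Ca Cb RB by auto
      then show ?thesis unfolding xe by (simp add: vec.span_add vec.span_scale)
    qed
    then show ?thesis by auto
  qed
  have cardB: "card B = CARD('n)"
  proof -
    have "card B = vec.dim B" using vec.dim_eq_card_independent[OF vind] by simp
    also have "\<dots> = vec.dim (vec.span B)" by simp
    also have "\<dots> = CARD('n)" unfolding vspan by (rule vec_dim_card)
    finally show ?thesis .
  qed
  obtain e where e: "bij_betw e (UNIV :: 'n set) B"
    using finite_same_card_bij[of "UNIV :: 'n set" B] finB cardB by auto
  have eB: "e k \<in> B" for k using e by (auto simp: bij_betw_def)
  have einj: "e k = e l \<Longrightarrow> k = l" for k l using e by (auto simp: bij_betw_def inj_def)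
  have eorth: "cinner (e k) (e l) = (if k = l then 1 else 0)" for k l
    using orthn[OF eB eB] einj by auto
  define W where "W = (\<chi> k j. cnj (e k $ j))"
  have adjW: "adjoint_mat W = (\<chi> j k. e k $ j)" by (simp add: W_def adjoint_mat_def)
  have WW: "W ** adjoint_mat W = mat 1"
  proof -
    have "(W ** adjoint_mat W) $ k $ l = mat 1 $ k $ l" for k l
    proof -
      have "(W ** adjoint_mat W) $ k $ l = (\<Sum>j\<in>UNIV. e l $ j * cnj (e k $ j))"
        unfolding matrix_matrix_mult_def adjW by (simp add: W_def mult.commute)
      also have "\<dots> = cinner (e l) (e k)" by (simp add: cinner_def)
      finally show ?thesis by (simp add: eorth mat_def)
    qed
    then show ?thesis by (simp add: vec_eq_iff)
  qed
  then have WW': "adjoint_mat W ** W = mat 1" using matrix_left_right_inverse by blast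
  have unit: "unitary_mat W" unfolding unitary_mat_def using WW WW' by simp
  define S where "S = W ** T ** adjoint_mat W"
  have Sc: "S $ k $ l = cinner (T *v e l) (e k)" for k l
  proof -
    have "S $ k $ l = (\<Sum>m\<in>UNIV. (\<Sum>j\<in>UNIV. cnj (e k $ j) * T $ j $ m) * e l $ m)"
      unfolding S_def matrix_matrix_mult_def adjW by (simp add: W_def)
    also have "\<dots> = (\<Sum>m\<in>UNIV. \<Sum>j\<in>UNIV. cnj (e k $ j) * T $ j $ m * e l $ m)"
      by (simp add: sum_distrib_right)
    also have "\<dots> = (\<Sum>j\<in>UNIV. \<Sum>m\<in>UNIV. cnj (e k $ j) * T $ j $ m * e l $ m)"
      by (rule sum.swap)
    also have "\<dots> = (\<Sum>j\<in>UNIV. (\<Sum>m\<in>UNIV. T $ j $ m * e l $ m) * cnj (e k $ j))"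
      by (simp add: sum_distrib_left sum_distrib_right mult_ac)
    also have "\<dots> = cinner (T *v e l) (e k)" by (simp add: cinner_def matrix_vector_mult_def)
    finally show ?thesis .
  qed
  have sym: "complex_symmetric S"
    unfolding complex_symmetric_def
    by (simp add: vec_eq_iff transpose_def Sc R_sym[OF CB[OF eB] CB[OF eB]])
  have "adjoint_mat W ** S ** W = T"
    by (simp add: S_def matrix_mul_assoc WW')
      (metis WW' matrix_mul_assoc matrix_mul_lid matrix_mul_rid)
  then have "unitarily_equivalent T S" unfolding unitarily_equivalent_def using unit by metis
  then show ?thesis using sym by blast
qed

end

theorem lemma3:
  fixes T :: "complex^('n::{finite,linorder})^('n::{finite,linorder})"
    and lam :: "('n::{finite,linorder}) \<Rightarrow> complex"
    and u v :: "('n::{finite,linorder}) \<Rightarrow> complex^('n::{finite,linorder})"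
    and \<alpha> :: "('n::{finite,linorder}) \<Rightarrow> complex"
  assumes distinct: "inj lam"
    and u_unit: "\<And>i. norm (u i) = 1"
    and u_eig: "\<And>i. T *v u i = lam i *s u i"
    and v_unit: "\<And>i. norm (v i) = 1"
    and v_eig: "\<And>i. adjoint_mat T *v v i = cnj (lam i) *s v i"
    and alpha_mod: "\<And>i. norm (\<alpha> i) = 1"
    and rel: "\<And>i j. i < j \<Longrightarrow> cinner (u i) (u j) = cnj (\<alpha> i) * \<alpha> j * cinner (v j) (v i)"
  shows "\<exists>S. complex_symmetric S \<and> unitarily_equivalent T S"
proof -
  interpret lsetup T lam u v \<alpha>
    by unfold_locales (fact assms)+
  show ?thesis by (rule main)
qed

end
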